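(* Let $n\ge 3$ be an odd integer and $k\ge 3$ an integer. Then the metric dimension of $(C_n\square P_k)\square P_2$ is $3$, i.e. the minimum size of a resolving set of $(C_n\square P_k)\square P_2$ is $3$.
   Context: All graphs are finite and connected; $d(u,v)$ is the shortest-path distance. $C_n$ is the cycle on $n$ vertices and $P_k$ the path on $k$ vertices. The cartesian product $G\square H$ has vertex set $V(G)\times V(H)$, with $(g_1,h_1)$ adjacent to $(g_2,h_2)$ iff either $h_1=h_2$ and $g_1g_2\in E(G)$, or $g_1=g_2$ and $h_1h_2\in E(H)$. For an ordered set $Q=\{q_1,\dots,q_l\}$ of vertices, $r(x|Q)=(d(x,q_1),\dots,d(x,q_l))$. $Q$ is a resolving set of $G$ if any two distinct vertices of $G$ have distinct vectors $r(\cdot|Q)$; the metric dimension $\beta(G)$ is the minimum size of a resolving set. *)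

theory Defs
  imports Main
begin

type_synonym 'a graph = "'a set \<times> ('a \<Rightarrow> 'a \<Rightarrow> bool)"

definition verts :: "'a graph \<Rightarrow> 'a set" where "verts G = fst G"
definition adj :: "'a graph \<Rightarrow> 'a \<Rightarrow> 'a \<Rightarrow> bool" where "adj G = snd G"

definition is_walk :: "'a graph \<Rightarrow> 'a list \<Rightarrow> bool" where
  "is_walk G xs \<longleftrightarrow> xs \<noteq> [] \<and> set xs \<subseteq> verts G \<and>
     (\<forall>i. Suc i < length xs \<longrightarrow> adj G (xs ! i) (xs ! Suc i))"

definition dist :: "'a graph \<Rightarrow> 'a \<Rightarrow> 'a \<Rightarrow> nat" where
  "dist G u v = (LEAST n. \<exists>xs. is_walk G xs \<and> hd xs = u \<and> last xs = v \<and> length xs = Suc n)"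

text \<open>Q resolves G: distinct vertices have distinct distance vectors to Q
  (for a set, comparing the distance functions restricted to Q is the same as
   comparing the vectors r(x|Q) for any ordering of Q).\<close>
definition resolving_set :: "'a graph \<Rightarrow> 'a set \<Rightarrow> bool" where
  "resolving_set G Q \<longleftrightarrow> Q \<subseteq> verts G \<and>
     (\<forall>x\<in>verts G. \<forall>y\<in>verts G. x \<noteq> y \<longrightarrow> (\<exists>q\<in>Q. dist G x q \<noteq> dist G y q))"

definition metric_dim :: "'a graph \<Rightarrow> nat" where
  "metric_dim G = (LEAST l. \<exists>Q. finite Q \<and> card Q = l \<and> resolving_set G Q)"

definition cycle_graph :: "nat \<Rightarrow> nat graph" where
  "cycle_graph n = ({0..<n}, \<lambda>i j. i \<noteq> j \<and> (j = Suc i mod n \<or> i = Suc j mod n))"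

definition path_graph :: "nat \<Rightarrow> nat graph" where
  "path_graph k = ({0..<k}, \<lambda>i j. j = Suc i \<or> i = Suc j)"

definition cart_prod :: "'a graph \<Rightarrow> 'b graph \<Rightarrow> ('a \<times> 'b) graph" where
  "cart_prod G H = (verts G \<times> verts H,
     \<lambda>(g1,h1) (g2,h2). (h1 = h2 \<and> adj G g1 g2) \<or> (g1 = g2 \<and> adj H h1 h2))"

end

theory Submission
  imports Defs
begin

definition dd :: "nat \<Rightarrow> nat \<Rightarrow> nat" where "dd x y = (if x \<le> y then y - x else x - y)"
definition cd :: "nat \<Rightarrow> nat \<Rightarrow> nat \<Rightarrow> nat" where "cd n x y = min (dd x y) (n - dd x y)"
definition DD :: "nat \<Rightarrow> ((nat\<times>nat)\<times>nat) \<Rightarrow> ((nat\<times>nat)\<times>nat) \<Rightarrow> nat" where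
  "DD n u v = (case u of ((i,j),t) \<Rightarrow> case v of ((a,b),s) \<Rightarrow> cd n i a + dd j b + dd t s)"

lemma dist_eq:
  assumes "u \<in> verts G" "v \<in> verts G"
  and step: "\<And>x y. x\<in>verts G \<Longrightarrow> y\<in>verts G \<Longrightarrow> adj G x y \<Longrightarrow> D x \<le> D y + 1"
  and desc: "\<And>x. x\<in>verts G \<Longrightarrow> D x > 0 \<Longrightarrow> \<exists>y\<in>verts G. adj G x y \<and> D x = D y + 1"
  and zero: "\<And>x. x\<in>verts G \<Longrightarrow> D x = 0 \<longleftrightarrow> x = v"
  shows "dist G u v = D u"
proof -
  have ex: "\<exists>xs. is_walk G xs \<and> hd xs = x \<and> last xs = v \<and> length xs = Suc m"
    if "x \<in> verts G" "D x = m" for x m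
    using that
  proof (induction m arbitrary: x)
    case 0
    then have "x = v" using zero by auto
    then show ?case using 0 by (intro exI[of _ "[x]"]) (auto simp: is_walk_def)
  next
    case (Suc m)
    then obtain y where y: "y \<in> verts G" "adj G x y" "D x = D y + 1" using desc by fastforce
    then obtain ys where ys: "is_walk G ys" "hd ys = y" "last ys = v" "length ys = Suc m"
      using Suc by auto
    have "is_walk G (x # ys)"
      using ys y Suc.prems unfolding is_walk_def
      by (auto simp: nth_Cons split: nat.splits) (metis hd_conv_nth)
    then show ?case using ys by (intro exI[of _ "x#ys"]) auto
  qed
  have lb: "D (hd xs) + 1 \<le> length xs" if "is_walk G xs" "last xs = v" for xs
    using that
  proof (induction xs)
    case Nil then show ?case by (simp add: is_walk_def)
  next
    case (Cons x xs)
    show ?case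
    proof (cases xs)
      case Nil
      then show ?thesis using Cons.prems zero by (auto simp: is_walk_def)
    next
      case (Cons y ys)
      have w: "is_walk G xs" using Cons.prems \<open>xs = y # ys\<close> unfolding is_walk_def
        by auto
      have a: "adj G x y" using Cons.prems \<open>xs = y # ys\<close> unfolding is_walk_def by force
      have "x \<in> verts G" "y \<in> verts G" using Cons.prems \<open>xs = y # ys\<close> unfolding is_walk_def by auto
      then have "D x \<le> D y + 1" using step a by blast
      moreover have "D y + 1 \<le> length xs" using Cons.IH w Cons.prems \<open>xs = y # ys\<close> by auto
      ultimately show ?thesis by simp
    qed
  qed
  show ?thesis unfolding dist_def
  proof (rule Least_equality)
    show "\<exists>xs. is_walk G xs \<and> hd xs = u \<and> last xs = v \<and> length xs = Suc (D u)"
      using ex assms(1) by blast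
  next
    fix m assume "\<exists>xs. is_walk G xs \<and> hd xs = u \<and> last xs = v \<and> length xs = Suc m"
    then obtain xs where "is_walk G xs" "hd xs = u" "last xs = v" "length xs = Suc m" by blast
    then show "D u \<le> m" using lb by fastforce
  qed
qed

abbreviation GG :: "nat \<Rightarrow> nat \<Rightarrow> ((nat\<times>nat)\<times>nat) graph" where
  "GG n k \<equiv> cart_prod (cart_prod (cycle_graph n) (path_graph k)) (path_graph 2)"

lemma verts_G: "verts (GG n k) = ({0..<n} \<times> {0..<k}) \<times> {0..<2}"
  by (simp add: verts_def cart_prod_def cycle_graph_def path_graph_def)

lemma adj_G: "adj (GG n k) ((i,j),t) ((i',j'),t') \<longleftrightarrow>
  (t = t' \<and> ((j = j' \<and> i \<noteq> i' \<and> (i' = Suc i mod n \<or> i = Suc i' mod n)) \<or> (i = i' \<and> (j' = Suc j \<or> j = Suc j'))))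
  \<or> (i = i' \<and> j = j' \<and> (t' = Suc t \<or> t = Suc t'))"
  by (auto simp: adj_def cart_prod_def cycle_graph_def path_graph_def)

lemma suc_mod: "i < n \<Longrightarrow> Suc i mod n = (if Suc i = n then 0 else Suc i)"
  by auto

lemma cd_step:
  assumes "i < n" "i' < n" "a < n" "i' = Suc i mod n \<or> i = Suc i' mod n"
  shows "cd n i a \<le> cd n i' a + 1"
  using assms unfolding cd_def dd_def by (auto simp: suc_mod split: if_splits)

lemma cd_desc:
  assumes "i < n" "a < n" "i \<noteq> a" "n \<ge> 3"
  shows "\<exists>i'<n. i \<noteq> i' \<and> (i' = Suc i mod n \<or> i = Suc i' mod n) \<and> cd n i a = cd n i' a + 1"
proof (cases "i < a")
  case True
  show ?thesis
  proof (cases "a - i \<le> n - (a - i)")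
    case True
    then show ?thesis using assms \<open>i < a\<close> by (intro exI[of _ "Suc i"]) (auto simp: cd_def dd_def suc_mod)
  next
    case False
    then show ?thesis using assms \<open>i < a\<close>
      by (intro exI[of _ "if i = 0 then n - 1 else i - 1"]) (auto simp: cd_def dd_def suc_mod)
  qed
next
  case False
  show ?thesis
  proof (cases "i - a \<le> n - (i - a)")
    case True
    then show ?thesis using assms \<open>\<not> i < a\<close>
      by (intro exI[of _ "i - 1"]) (auto simp: cd_def dd_def suc_mod)
  next
    case False
    then show ?thesis using assms \<open>\<not> i < a\<close>
      by (intro exI[of _ "if Suc i = n then 0 else Suc i"]) (auto simp: cd_def dd_def suc_mod)
  qed
qed

lemma DD_step:
  assumes "x \<in> verts (GG n k)" "y \<in> verts (GG n k)" "v \<in> verts (GG n k)" "adj (GG n k) x y"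
  shows "DD n x v \<le> DD n y v + 1"
proof -
  obtain i j t where x: "x = ((i,j),t)" by (metis prod.exhaust)
  obtain i' j' t' where y: "y = ((i',j'),t')" by (metis prod.exhaust)
  obtain a b s where v: "v = ((a,b),s)" by (metis prod.exhaust)
  have r: "i < n" "i' < n" "a < n" using assms x y v by (auto simp: verts_G)
  have A: "(t = t' \<and> ((j = j' \<and> i \<noteq> i' \<and> (i' = Suc i mod n \<or> i = Suc i' mod n)) \<or> (i = i' \<and> (j' = Suc j \<or> j = Suc j'))))
  \<or> (i = i' \<and> j = j' \<and> (t' = Suc t \<or> t = Suc t'))" using assms(4) x y adj_G by metis
  show ?thesis
  proof (cases "t = t' \<and> j = j' \<and> (i' = Suc i mod n \<or> i = Suc i' mod n)")
    case True
    then show ?thesis using cd_step[OF r] x y v by (simp add: DD_def)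
  next
    case False
    then show ?thesis using A by (auto simp: DD_def x y v dd_def)
  qed
qed

lemma DD_desc:
  assumes "x \<in> verts (GG n k)" "v \<in> verts (GG n k)" "DD n x v > 0" "n \<ge> 3"
  shows "\<exists>y\<in>verts (GG n k). adj (GG n k) x y \<and> DD n x v = DD n y v + 1"
proof -
  obtain i j t where x: "x = ((i,j),t)" by (metis prod.exhaust)
  obtain a b s where v: "v = ((a,b),s)" by (metis prod.exhaust)
  have r: "i < n" "a < n" "j < k" "b < k" "t < 2" "s < 2" using assms x v by (auto simp: verts_G)
  show ?thesis
  proof (cases "t = s")
    case False
    then show ?thesis using r x v
      by (intro bexI[of _ "((i,j),s)"]) (auto simp: adj_G DD_def dd_def verts_G)
  next
    case ts: True
    show ?thesis
    proof (cases "j = b")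
      case False
      then show ?thesis using r x v ts
        by (intro bexI[of _ "((i,if j < b then Suc j else j - 1),t)"]) (auto simp: adj_G DD_def dd_def verts_G)
    next
      case jb: True
      then have "i \<noteq> a" using assms(3) x v ts by (auto simp: DD_def dd_def cd_def)
      then obtain i' where i': "i' < n" "i \<noteq> i'" "i' = Suc i mod n \<or> i = Suc i' mod n" "cd n i a = cd n i' a + 1"
        using cd_desc[OF r(1,2) _ assms(4)] by blast
      then show ?thesis using r x v ts jb
        by (intro bexI[of _ "((i',j),t)"]) (auto simp: adj_G DD_def dd_def verts_G)
    qed
  qed
qed

lemma DD_zero:
  assumes "x \<in> verts (GG n k)" "v \<in> verts (GG n k)"
  shows "DD n x v = 0 \<longleftrightarrow> x = v"
proof -
  obtain i j t where x: "x = ((i,j),t)" by (metis prod.exhaust)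
  obtain a b s where v: "v = ((a,b),s)" by (metis prod.exhaust)
  have r: "i < n" "a < n" using assms x v by (auto simp: verts_G)
  then show ?thesis using x v by (auto simp: DD_def dd_def cd_def split: if_splits)
qed

lemma dist_G:
  assumes "x \<in> verts (GG n k)" "v \<in> verts (GG n k)" "n \<ge> 3"
  shows "dist (GG n k) x v = DD n x v"
  by (rule dist_eq[OF assms(1,2)]) (use DD_step DD_desc DD_zero assms in auto)

lemma res_arith:
  assumes "n = 2*m+1" "m \<ge> 1" "i < n" "i' < n" "t < 2" "t' < (2::nat)"
   "cd n i 0 + j + t = cd n i' 0 + j' + t'"
   "cd n i 0 + j + (1 - t) = cd n i' 0 + j' + (1 - t')"
   "cd n i m + j + t = cd n i' m + j' + t'"
  shows "i = i' \<and> j = j' \<and> t = t'"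
proof -
  have tt: "t = t'" using assms(5-8) by arith
  have c0: "cd n x 0 = (if x \<le> m then x else n - x)" if "x < n" for x
    using that assms(1) unfolding cd_def dd_def min_def by (simp split: if_split; linarith)
  have cm: "cd n x m = (if x \<le> m then m - x else x - m)" if "x < n" for x
    using that assms(1) unfolding cd_def dd_def min_def by (simp split: if_split; linarith)
  have e1: "(if i \<le> m then i else n - i) + j = (if i' \<le> m then i' else n - i') + j'"
    using assms(7) tt c0 assms(3,4) by simp
  have e2: "(if i \<le> m then m - i else i - m) + j = (if i' \<le> m then m - i' else i' - m) + j'"
    using assms(9) tt cm assms(3,4) by simp
  have "i = i' \<and> j = j'"
  proof (cases "i \<le> m"; cases "i' \<le> m")
    assume "i \<le> m" "i' \<le> m" then show ?thesis using e1 e2 by simp linarith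
  next
    assume h: "\<not> i \<le> m" "\<not> i' \<le> m" then show ?thesis using e1 e2 by simp linarith
  next
    assume h: "i \<le> m" "\<not> i' \<le> m"
    then have "i + j = n - i' + j'" "m - i + j = i' - m + j'" using e1 e2 by simp_all
    moreover obtain X Y Z where "X = n - i'" "Y = m - i" "Z = i' - m" by blast
    moreover have "X + i' = n" "Y + i = m" "Z + m = i'" using h assms(1,4) calculation(3-5) by auto
    ultimately have "2*(i+i') = 4*m+1" using assms(1) by simp
    then have "even (4*m+1)" by (metis dvd_triv_left) then show ?thesis by simp
  next
    assume h: "\<not> i \<le> m" "i' \<le> m"
    then have "n - i + j = i' + j'" "i - m + j = m - i' + j'" using e1 e2 by simp_all
    moreover obtain X Y Z where "X = n - i" "Y = m - i'" "Z = i - m" by blast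
    moreover have "X + i = n" "Y + i' = m" "Z + m = i" using h assms(1,3) calculation(3-5) by auto
    ultimately have "2*(i+i') = 4*m+1" using assms(1) by simp
    then have "even (4*m+1)" by (metis dvd_triv_left) then show ?thesis by simp
  qed
  then show ?thesis using tt by simp
qed

lemma not_res2:
  assumes "a \<in> verts (GG n k)" "b \<in> verts (GG n k)" "n \<ge> 3" "k \<ge> 2"
  shows "\<exists>x\<in>verts (GG n k). \<exists>y\<in>verts (GG n k). x \<noteq> y \<and> DD n x a = DD n y a \<and> DD n x b = DD n y b"
proof -
  obtain i j t where a: "a = ((i,j),t)" by (metis prod.exhaust)
  have r: "i < n" "j < k" "t < 2" using assms a by (auto simp: verts_G)
  define x1 where "x1 = ((Suc i mod n, j),t)"
  define x2 where "x2 = ((if i=0 then n-1 else i-1, j),t)"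
  define x3 where "x3 = ((i, if j=0 then 1 else j-1), t)"
  define x4 where "x4 = ((i,j),1-t)"
  have V: "x1 \<in> verts (GG n k)" "x2 \<in> verts (GG n k)" "x3 \<in> verts (GG n k)" "x4 \<in> verts (GG n k)"
    using r assms unfolding x1_def x2_def x3_def x4_def by (auto simp: verts_G)
  have adj: "adj (GG n k) x1 a" "adj (GG n k) x2 a" "adj (GG n k) x3 a" "adj (GG n k) x4 a"
     "adj (GG n k) a x1" "adj (GG n k) a x2" "adj (GG n k) a x3" "adj (GG n k) a x4"
    using r assms unfolding x1_def x2_def x3_def x4_def a by (cases "t = 0"; auto simp: adj_G suc_mod)+
  have d1: "DD n x1 a = 1" "DD n x2 a = 1" "DD n x3 a = 1" "DD n x4 a = 1"
    using r assms unfolding x1_def x2_def x3_def x4_def a by (auto simp: DD_def cd_def dd_def suc_mod)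
  have ne: "x1 \<noteq> x2" "x1 \<noteq> x3" "x1 \<noteq> x4" "x2 \<noteq> x3" "x2 \<noteq> x4" "x3 \<noteq> x4"
    using r assms unfolding x1_def x2_def x3_def x4_def by (auto simp: suc_mod split: if_splits)
  have s: "DD n xx b \<le> DD n a b + 1 \<and> DD n a b \<le> DD n xx b + 1" if "xx \<in> {x1,x2,x3,x4}" for xx
    using that DD_step[OF _ _ assms(2)] V adj assms(1) by blast
  have "DD n x1 b = DD n x2 b \<or> DD n x1 b = DD n x3 b \<or> DD n x1 b = DD n x4 b \<or>
        DD n x2 b = DD n x3 b \<or> DD n x2 b = DD n x4 b \<or> DD n x3 b = DD n x4 b"
    using s[of x1] s[of x2] s[of x3] s[of x4] by auto
  then show ?thesis using V ne d1 by metis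
qed

lemma card_le2:
  assumes "finite Q" "card Q \<le> 2" "Q \<subseteq> V" "v0 \<in> V"
  shows "\<exists>a\<in>V. \<exists>b\<in>V. Q \<subseteq> {a,b}"
proof -
  have "card Q = 0 \<or> card Q = 1 \<or> card Q = 2" using assms(2) by linarith
  then show ?thesis
  proof (elim disjE)
    assume "card Q = 0" then have "Q = {}" using assms(1) by simp
    then show ?thesis using assms by auto
  next
    assume "card Q = 1" then obtain a where "Q = {a}" by (meson card_1_singletonE)
    then show ?thesis using assms by auto
  next
    assume "card Q = 2" then obtain a b where "Q = {a,b}" by (meson card_2_iff)
    then show ?thesis using assms by auto
  qed
qed

lemma dd0: "dd x 0 = x" by (simp add: dd_def)
lemma dd1: "x < 2 \<Longrightarrow> dd x 1 = 1 - x" by (auto simp: dd_def)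
lemma dd1': "x < 2 \<Longrightarrow> dd x (Suc 0) = 1 - x" by (auto simp: dd_def)

theorem theorem3p2:
  fixes n k :: nat
  assumes "odd n" and "n \<ge> 3" and "k \<ge> 3"
  shows "metric_dim (cart_prod (cart_prod (cycle_graph n) (path_graph k)) (path_graph 2)) = 3"
proof -
  obtain m where nm: "n = 2*m+1" using assms(1) oddE by blast
  have m1: "m \<ge> 1" using nm assms(2) by simp
  define Q where "Q = {((0::nat,0::nat),0::nat), ((0,0),1), ((m,0),0)}"
  have QV: "Q \<subseteq> verts (GG n k)" using nm assms unfolding Q_def by (auto simp: verts_G)
  have fQ: "finite Q" "card Q = 3" using m1 unfolding Q_def by auto
  have rQ: "resolving_set (GG n k) Q"
    unfolding resolving_set_def
  proof (intro conjI QV ballI impI)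
    fix x y assume x: "x \<in> verts (GG n k)" and y: "y \<in> verts (GG n k)" and "x \<noteq> y"
    show "\<exists>q\<in>Q. dist (GG n k) x q \<noteq> dist (GG n k) y q"
    proof (rule ccontr)
      assume ne: "\<not> ?thesis"
      have e: "DD n x q = DD n y q" if "q \<in> Q" for q
      proof -
        have "q \<in> verts (GG n k)" using that QV by blast
        then show ?thesis using that ne dist_G[OF x _ assms(2), of q] dist_G[OF y _ assms(2), of q] by auto
      qed
      obtain i j t where xx: "x = ((i,j),t)" by (metis prod.exhaust)
      obtain i' j' t' where yy: "y = ((i',j'),t')" by (metis prod.exhaust)
      have r: "i < n" "i' < n" "t < 2" "t' < 2" using x y xx yy by (auto simp: verts_G)
      have "i = i' \<and> j = j' \<and> t = t'"
        apply (rule res_arith[OF nm m1 r])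
        using e[of "((0,0),0)"] e[of "((0,0),1)"] e[of "((m,0),0)"] r
        by (auto simp: Q_def DD_def xx yy dd0 dd1 dd1')
      then show False using \<open>x \<noteq> y\<close> xx yy by simp
    qed
  qed
  show ?thesis unfolding metric_dim_def
  proof (rule Least_equality)
    show "\<exists>Q. finite Q \<and> card Q = 3 \<and> resolving_set (GG n k) Q" using fQ rQ by blast
  next
    fix l assume "\<exists>Q. finite Q \<and> card Q = l \<and> resolving_set (GG n k) Q"
    then obtain P where P: "finite P" "card P = l" "resolving_set (GG n k) P" by blast
    show "3 \<le> l"
    proof (rule ccontr)
      assume "\<not> 3 \<le> l"
      have v0: "((0,0),0) \<in> verts (GG n k)" using assms by (auto simp: verts_G)
      have PV: "P \<subseteq> verts (GG n k)" using P(3) by (simp add: resolving_set_def)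
      obtain a b where ab: "a \<in> verts (GG n k)" "b \<in> verts (GG n k)" "P \<subseteq> {a,b}"
        using card_le2[OF P(1) _ PV v0] P(2) \<open>\<not> 3 \<le> l\<close> by force
      obtain x y where xy: "x \<in> verts (GG n k)" "y \<in> verts (GG n k)" "x \<noteq> y"
         "DD n x a = DD n y a" "DD n x b = DD n y b"
        using not_res2[OF ab(1,2) assms(2)] assms(3) by force
      then obtain q where q: "q \<in> P" "dist (GG n k) x q \<noteq> dist (GG n k) y q"
        using P(3) unfolding resolving_set_def by blast
      then have "q = a \<or> q = b" using ab by blast
      then show False using q xy ab dist_G[OF xy(1) _ assms(2), of q] dist_G[OF xy(2) _ assms(2), of q] by auto
    qed
  qed
qed

end
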